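(* Let $t,b,k$ be positive integers with $3\le k\le t$ and $\ell=bk/(t(t-1))$ an integer, and let $d^*$ be a circular neighbor-balanced design in $\Omega_{(t,b,k)}$. Then under model $(\mathcal{M}1)$ the information matrix for the total effects $\phi=\tau+\lambda$ is $$C_{d^*}[\phi]=\frac{b(k-2)}{2(t-1)}\,Q_t,\qquad Q_t=I_t-t^{-1}J_t.$$
   Context: Designs: $t$ treatments, $b$ linear blocks; block $i$ has inner plots $j=1,\dots,k$ and border plots $j=0,k+1$; $d(i,j)$ is the treatment on plot $(i,j)$; circular means $d(i,0)=d(i,k)$, $d(i,k+1)=d(i,1)$. $\Omega_{(t,b,k)}$ is the set of circular designs with $t$ treatments and $b$ blocks of length $k$. $J_t$ is the $t\times t$ all-ones matrix. Model $(\mathcal{M}1)$: responses $Y_{i,j}$ ($1\le i\le b$, $1\le j\le k$) uncorrelated with common variance, $\mathbb{E}(Y_{i,j})=\beta_i+\tau_{d(i,j)}+\lambda_{d(i,j-1)}$, i.e. $\mathbb{E}(Y)=B\beta+T_d\tau+L_d\lambda$ with $B$ block incidence and $T_d,L_d$ ($bk\times t$) having a single $1$ in row $(i,j)$ at column $d(i,j)$, resp. $d(i,j-1)$. $\phi=K'\alpha$ with $\alpha=(\tau',\lambda')'$, $K=\mathbf 1_2\otimes I_t$. Information matrix: with $A=(T_d\mid L_d)$, $X^+$ the Moore–Penrose inverse, $\mathrm{pr}_{(X)}=X(X'X)^+X'$, $\mathrm{pr}^\perp_{(X)}=I-\mathrm{pr}_{(X)}$, $M=I-K(K'K)^+K'$,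 $X_1=AK(K'K)^+$, $X_2=(AM\mid B)$: $C_d[\phi]=X_1'\mathrm{pr}^\perp_{(X_2)}X_1$. CNBD: a design in $\Omega_{(t,b,k)}$ that is binary (each treatment at most once among the inner plots of each block), a balanced block design (equal replication and each unordered pair of distinct treatments together in the same number of blocks), and such that for each ordered pair $(a,c)$ of distinct treatments exactly $\ell$ inner plots $(i,j)$ have $d(i,j)=a$, $d(i,j+1)=c$. *)

theory Defs
  imports "Jordan_Normal_Form.Matrix"
begin

text \<open>Moore-Penrose inverse of a real matrix: the unique X satisfying the four Penrose
  equations (for real matrices the conjugate transpose is the transpose).\<close>
definition mp_inv :: "real mat \<Rightarrow> real mat" where
  "mp_inv A = (THE X. X \<in> carrier_mat (dim_col A) (dim_row A) \<and>
       A * X * A = A \<and> X * A * X = X \<and>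
       transpose_mat (A * X) = A * X \<and> transpose_mat (X * A) = X * A)"

definition pr_mat :: "real mat \<Rightarrow> real mat" where
  "pr_mat X = X * mp_inv (transpose_mat X * X) * transpose_mat X"

definition pr_perp :: "real mat \<Rightarrow> real mat" where
  "pr_perp X = 1\<^sub>m (dim_row X) - pr_mat X"

definition hcat :: "real mat \<Rightarrow> real mat \<Rightarrow> real mat" where
  "hcat X Y = mat (dim_row X) (dim_col X + dim_col Y)
     (\<lambda>(r, c). if c < dim_col X then X $$ (r, c) else Y $$ (r, c - dim_col X))"

definition J_mat :: "nat \<Rightarrow> real mat" where
  "J_mat n = mat n n (\<lambda>_. 1)"

text \<open>Blocks i < b, inner plots j < k (0-indexed; plot j here is plot j+1 of the
  paper), treatments 0..t-1. A circular design is determined by its inner plots: the left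
  border plot of block i carries d i (k-1), the right border plot carries d i 0.
  Hence the left neighbour of inner plot j is plot (j + k - 1) mod k and the right
  neighbour is plot (j + 1) mod k.\<close>
definition design :: "nat \<Rightarrow> nat \<Rightarrow> nat \<Rightarrow> (nat \<Rightarrow> nat \<Rightarrow> nat) \<Rightarrow> bool" where
  "design t b k d \<longleftrightarrow> (\<forall>i<b. \<forall>j<k. d i j < t)"

definition left_nb :: "nat \<Rightarrow> (nat \<Rightarrow> nat \<Rightarrow> nat) \<Rightarrow> nat \<Rightarrow> nat \<Rightarrow> nat" where
  "left_nb k d i j = d i ((j + k - 1) mod k)"

definition right_nb :: "nat \<Rightarrow> (nat \<Rightarrow> nat \<Rightarrow> nat) \<Rightarrow> nat \<Rightarrow> nat \<Rightarrow> nat" where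
  "right_nb k d i j = d i ((j + 1) mod k)"

definition binary_design :: "nat \<Rightarrow> nat \<Rightarrow> (nat \<Rightarrow> nat \<Rightarrow> nat) \<Rightarrow> bool" where
  "binary_design b k d \<longleftrightarrow> (\<forall>i<b. inj_on (d i) {..<k})"

definition balanced_block :: "nat \<Rightarrow> nat \<Rightarrow> nat \<Rightarrow> (nat \<Rightarrow> nat \<Rightarrow> nat) \<Rightarrow> bool" where
  "balanced_block t b k d \<longleftrightarrow>
     (\<exists>r. \<forall>a<t. card {(i, j). i < b \<and> j < k \<and> d i j = a} = r) \<and>
     (\<exists>\<mu>. \<forall>a<t. \<forall>c<t. a \<noteq> c \<longrightarrow>
         card {i. i < b \<and> a \<in> d i ` {..<k} \<and> c \<in> d i ` {..<k}} = \<mu>)"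

definition neighbor_balanced :: "nat \<Rightarrow> nat \<Rightarrow> nat \<Rightarrow> nat \<Rightarrow> (nat \<Rightarrow> nat \<Rightarrow> nat) \<Rightarrow> bool" where
  "neighbor_balanced t b k l d \<longleftrightarrow>
     (\<forall>a<t. \<forall>c<t. a \<noteq> c \<longrightarrow>
        card {(i, j). i < b \<and> j < k \<and> d i j = a \<and> right_nb k d i j = c} = l)"

definition CNBD :: "nat \<Rightarrow> nat \<Rightarrow> nat \<Rightarrow> nat \<Rightarrow> (nat \<Rightarrow> nat \<Rightarrow> nat) \<Rightarrow> bool" where
  "CNBD t b k l d \<longleftrightarrow> design t b k d \<and> binary_design b k d \<and>
     balanced_block t b k d \<and> neighbor_balanced t b k l d"

text \<open>Model (M1) matrices. Observation (i,j) (block i, inner plot j) is row i*k + j.\<close>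
definition B_mat :: "nat \<Rightarrow> nat \<Rightarrow> real mat" where
  "B_mat b k = mat (b * k) b (\<lambda>(r, c). if r div k = c then 1 else 0)"

definition T_mat :: "nat \<Rightarrow> nat \<Rightarrow> nat \<Rightarrow> (nat \<Rightarrow> nat \<Rightarrow> nat) \<Rightarrow> real mat" where
  "T_mat t b k d = mat (b * k) t (\<lambda>(r, c). if d (r div k) (r mod k) = c then 1 else 0)"

definition L_mat :: "nat \<Rightarrow> nat \<Rightarrow> nat \<Rightarrow> (nat \<Rightarrow> nat \<Rightarrow> nat) \<Rightarrow> real mat" where
  "L_mat t b k d = mat (b * k) t (\<lambda>(r, c). if left_nb k d (r div k) (r mod k) = c then 1 else 0)"

text \<open>K = 1_2 \<otimes> I_t (a 2t x t matrix).\<close>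
definition K_mat :: "nat \<Rightarrow> real mat" where
  "K_mat t = mat (2 * t) t (\<lambda>(r, c). if r mod t = c then 1 else 0)"

definition info_matrix :: "nat \<Rightarrow> nat \<Rightarrow> nat \<Rightarrow> (nat \<Rightarrow> nat \<Rightarrow> nat) \<Rightarrow> real mat" where
  "info_matrix t b k d =
    (let A = hcat (T_mat t b k d) (L_mat t b k d);
         K = K_mat t;
         KKp = mp_inv (transpose_mat K * K);
         M = 1\<^sub>m (2 * t) - K * KKp * transpose_mat K;
         X1 = A * K * KKp;
         X2 = hcat (A * M) (B_mat b k)
     in transpose_mat X1 * pr_perp X2 * X1)"

end

theory Submission
  imports Defs
begin

lemma mult_entry:
  "i < dim_row A \<Longrightarrow> j < dim_col B \<Longrightarrow> dim_col A = dim_row B \<Longrightarrow>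
   (A * B) $$ (i,j) = (\<Sum>p<dim_row B. A $$ (i,p) * B $$ (p,j))"
  by (simp add: scalar_prod_def atLeast0LessThan)

definition penrose :: "real mat \<Rightarrow> real mat \<Rightarrow> bool" where
  "penrose A X \<longleftrightarrow> X \<in> carrier_mat (dim_col A) (dim_row A) \<and>
       A * X * A = A \<and> X * A * X = X \<and>
       transpose_mat (A * X) = A * X \<and> transpose_mat (X * A) = X * A"

lemma penrose_unique:
  assumes X: "penrose A X" and Y: "penrose A Y"
  shows "X = Y"
proof -
  define m n where "m = dim_row A" and "n = dim_col A"
  have A: "A \<in> carrier_mat m n" unfolding m_def n_def by auto
  have Xc: "X \<in> carrier_mat n m" and Yc: "Y \<in> carrier_mat n m"
    using X Y unfolding penrose_def m_def n_def by auto
  note XX = X[unfolded penrose_def] and YY = Y[unfolded penrose_def]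
  have tA: "transpose_mat A \<in> carrier_mat n m" using A by simp
  have tX: "transpose_mat X \<in> carrier_mat m n" using Xc by simp
  have tY: "transpose_mat Y \<in> carrier_mat m n" using Yc by simp
  (* X = X A X = X (AX)^T = X X^T A^T = X X^T (A Y A)^T = X X^T A^T Y^T A^T = X (AX)^T (AY)^T = X A X A Y = X A Y *)
  have e1: "transpose_mat A = transpose_mat A * transpose_mat Y * transpose_mat A"
  proof -
    have "transpose_mat A = transpose_mat (A * Y * A)" using YY by simp
    also have "\<dots> = transpose_mat A * transpose_mat (A * Y)"
      by (rule transpose_mult[OF mult_carrier_mat[OF A Yc] A])
    also have "\<dots> = transpose_mat A * (transpose_mat Y * transpose_mat A)"
      using A Yc by (simp add: transpose_mult[of _ m n _ m])
    finally show ?thesis using tA tY by (simp add: assoc_mult_mat[OF tA tY tA])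
  qed
  have "X = X * A * X" using XX by simp
  also have "\<dots> = X * transpose_mat (A * X)" using XX A Xc by simp
  also have "\<dots> = X * (transpose_mat X * transpose_mat A)" using A Xc by (simp add: transpose_mult[of _ m n _ m])
  also have "\<dots> = X * (transpose_mat X * (transpose_mat A * transpose_mat Y * transpose_mat A))"
    using e1 by simp
  also have "\<dots> = X * (transpose_mat X * transpose_mat A) * (transpose_mat Y * transpose_mat A)"
    using e1 by (simp add: assoc_mult_mat[OF Xc mult_carrier_mat[OF tX tA] mult_carrier_mat[OF tY tA]]
       assoc_mult_mat[OF tX tA mult_carrier_mat[OF tY tA]] assoc_mult_mat[OF tA tY tA])
  also have "\<dots> = X * transpose_mat (A * X) * transpose_mat (A * Y)"
    using A Xc Yc by (simp add: transpose_mult[of _ m n _ m])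
  also have "\<dots> = X * (A * X) * (A * Y)" using XX YY by simp
  also have "\<dots> = X * A * Y" using XX A Xc Yc by simp
  finally have x: "X = X * A * Y" .
  have e2: "transpose_mat A = transpose_mat A * transpose_mat X * transpose_mat A"
  proof -
    have "transpose_mat A = transpose_mat (A * X * A)" using XX by simp
    also have "\<dots> = transpose_mat A * transpose_mat (A * X)"
      by (rule transpose_mult[OF mult_carrier_mat[OF A Xc] A])
    also have "\<dots> = transpose_mat A * (transpose_mat X * transpose_mat A)"
      using A Xc by (simp add: transpose_mult[of _ m n _ m])
    finally show ?thesis using tA tX by (simp add: assoc_mult_mat[OF tA tX tA])
  qed
  have "Y = Y * A * Y" using YY by simp
  also have "\<dots> = transpose_mat (Y * A) * Y" using YY by simp
  also have "\<dots> = (transpose_mat A * transpose_mat Y) * Y" using A Yc by (simp add: transpose_mult[of _ n m _ n])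
  also have "\<dots> = (transpose_mat A * transpose_mat X * transpose_mat A) * transpose_mat Y * Y"
    using e2 tA tY Yc by (metis assoc_mult_mat)
  also have "\<dots> = (transpose_mat A * transpose_mat X) * (transpose_mat A * transpose_mat Y) * Y"
    by (simp only: assoc_mult_mat[OF mult_carrier_mat[OF tA tX] tA tY])
  also have "\<dots> = transpose_mat (X * A) * transpose_mat (Y * A) * Y"
    using A Xc Yc by (simp add: transpose_mult[of _ n m _ n])
  also have "\<dots> = (X * A) * (Y * A) * Y" using XX YY by simp
  also have "\<dots> = (X * A) * (Y * A * Y)"
    by (rule assoc_mult_mat[OF mult_carrier_mat[OF Xc A] mult_carrier_mat[OF Yc A] Yc])
  also have "\<dots> = X * A * Y" using YY by simp
  finally show ?thesis using x by simp
qed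

lemma mp_inv_eq: "penrose A X \<Longrightarrow> mp_inv A = X"
  unfolding mp_inv_def
  apply (rule the_equality)
   apply (simp add: penrose_def)
  using penrose_unique penrose_def by blast

lemma sum_lessThan_add: fixes m n :: nat and f :: "nat \<Rightarrow> real" shows "(\<Sum>p<m+n. f p) = (\<Sum>p<m. f p) + (\<Sum>p<n. f (p + m)::real)"
proof -
  have "(\<Sum>p<m+n. f p) = sum f {0..<m} + sum f {m..<m+n}"
    by (simp add: sum.atLeastLessThan_concat atLeast0LessThan[symmetric])
  also have "sum f {m..<m+n} = sum (\<lambda>p. f (p + m)) {0..<n}"
    using sum.shift_bounds_nat_ivl[of f 0 m n] by (simp add: add.commute)
  finally show ?thesis by (simp add: atLeast0LessThan)
qed

lemma sum_split2: fixes t :: nat and f :: "nat \<Rightarrow> real" shows "(\<Sum>p<2*t. f p) = (\<Sum>p<t. f p) + (\<Sum>p<t. f (p + t)::real)"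
  using sum_lessThan_add[where m=t and n=t and f=f] by (simp add: mult_2)

lemma sum_split3: fixes t b :: nat and f :: "nat \<Rightarrow> real" shows "(\<Sum>p<2*t+b. f p) = (\<Sum>p<t. f p) + (\<Sum>p<t. f (p + t)) + (\<Sum>q<b. f (q + 2*t)::real)"
  using sum_lessThan_add[where m="2*t" and n=b and f=f] sum_split2[where t=t and f=f] by simp

lemma sum_rows: fixes b k :: nat and f :: "nat \<Rightarrow> real" shows "(\<Sum>r<b*k. f r) = (\<Sum>i<b. \<Sum>j<k. f (i*k+j)::real)"
proof -
  have "(\<Sum>r<b*k. f r) = (\<Sum>m<b. sum f {m*k..<m*k+k})"
    using sum.nat_group[of f k b] by simp
  also have "\<dots> = (\<Sum>i<b. \<Sum>j<k. f (i*k+j))"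
  proof (rule sum.cong[OF refl])
    fix m
    show "sum f {m*k..<m*k+k} = (\<Sum>j<k. f (m*k+j))"
      using sum.shift_bounds_nat_ivl[of f 0 "m*k" k] by (simp add: add.commute atLeast0LessThan)
  qed
  finally show ?thesis .
qed

lemma sum_rot: fixes k :: nat and f :: "nat \<Rightarrow> real" shows "0 < k \<Longrightarrow> (\<Sum>j<k. f ((j+1) mod k)) = (\<Sum>j<k. f j::real)"
proof -
  assume "0 < k"
  then obtain m where k: "k = Suc m" by (cases k) auto
  have "(\<Sum>j<Suc m. f ((j+1) mod Suc m)) = (\<Sum>j<m. f ((j+1) mod Suc m)) + f 0"
    by simp
  also have "(\<Sum>j<m. f ((j+1) mod Suc m)) = (\<Sum>j<m. f (Suc j))"
    by (rule sum.cong) auto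
  finally show ?thesis unfolding k using sum.lessThan_Suc_shift[of f m] by simp
qed

lemma card_as_sum: fixes b k :: nat shows "real (card {(i,j). i<b \<and> j<k \<and> P i j}) = (\<Sum>i<b. \<Sum>j<k. if P i j then 1 else 0::real)"
proof -
  have "{(i,j). i<b \<and> j<k \<and> P i j} = (SIGMA i:{..<b}. {j\<in>{..<k}. P i j})" by auto
  then have "card {(i,j). i<b \<and> j<k \<and> P i j} = (\<Sum>i<b. card {j\<in>{..<k}. P i j})" by simp
  moreover have "real (card {j\<in>{..<k}. P i j}) = (\<Sum>j<k. if P i j then 1 else 0::real)" for i
    by (simp add: sum.inter_filter[symmetric])
  ultimately show ?thesis by simp
qed

lemma inj_count: "inj_on f A \<Longrightarrow> finite A \<Longrightarrow>
  (\<Sum>j\<in>A. if f j = a then 1 else 0::real) = (if a \<in> f ` A then 1 else 0)"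
proof -
  assume inj: "inj_on f A" and fin: "finite A"
  have "(\<Sum>j\<in>A. if f j = a then 1 else 0::real) = real (card {j\<in>A. f j = a})"
    using fin by (simp add: sum.inter_filter[symmetric])
  moreover have "{j\<in>A. f j = a} = (if a \<in> f ` A then {the_inv_into A f a} else {})"
    using inj by (auto simp: the_inv_into_f_f inj_on_def)
  ultimately show ?thesis by auto
qed

locale setting =
  fixes t b k l :: nat and d :: "nat \<Rightarrow> nat \<Rightarrow> nat"
  assumes k3: "3 \<le> k" and kt: "k \<le> t" and b0: "0 < b"
    and lval: "real l = real (b * k) / real (t * (t - 1))"
    and cnbd: "CNBD t b k l d"
begin

definition lf :: "nat \<Rightarrow> nat" where "lf j = (j + k - 1) mod k"
definition tt :: "nat \<Rightarrow> nat \<Rightarrow> real" where "tt r a = (if d (r div k) (r mod k) = a then 1 else 0)"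
definition ll :: "nat \<Rightarrow> nat \<Rightarrow> real" where "ll r a = (if d (r div k) (lf (r mod k)) = a then 1 else 0)"
definition bb :: "nat \<Rightarrow> nat \<Rightarrow> real" where "bb r i = (if r div k = i then 1 else 0)"
definition NN :: "nat \<Rightarrow> nat \<Rightarrow> real" where "NN i a = (if a \<in> d i ` {..<k} then 1 else 0)"
definition R :: real where "R = real b * real k / real t"
definition lam :: real where "lam = R * (real k - 1) / (real t - 1)"

lemma k0: "0 < k" using k3 by simp
lemma t3: "3 \<le> t" using k3 kt by simp

lemma des: "i < b \<Longrightarrow> j < k \<Longrightarrow> d i j < t"
  using cnbd unfolding CNBD_def design_def by blast
lemma inj: "i < b \<Longrightarrow> inj_on (d i) {..<k}"
  using cnbd unfolding CNBD_def binary_design_def by blast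

lemma divmod: "j < k \<Longrightarrow> (i*k+j) div k = i \<and> (i*k+j) mod k = j"
  using k0 by simp

lemma lf_lt: "lf j < k" using k0 by (simp add: lf_def)
lemma lf_rf: "j < k \<Longrightarrow> lf ((j+1) mod k) = j"
proof -
  assume j: "j < k"
  show ?thesis
  proof (cases "j + 1 = k")
    case True then show ?thesis by (simp add: lf_def)
  next
    case False
    then have "(j+1) mod k = j + 1" using j by simp
    then show ?thesis using j by (simp add: lf_def)
  qed
qed
lemma lf_neq: "j < k \<Longrightarrow> lf j \<noteq> j"
proof -
  assume j: "j < k"
  show ?thesis
  proof (cases j)
    case 0 then show ?thesis using k3 by (simp add: lf_def)
  next
    case (Suc m)
    then have "j + k - 1 = m + k" by simp
    then have "lf j = m" using j Suc by (simp add: lf_def)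
    then show ?thesis using Suc by simp
  qed
qed

lemma sum_lf: "(\<Sum>j<k. f (lf j)) = (\<Sum>j<k. f j::real)"
proof -
  have "(\<Sum>j<k. f (lf j)) = (\<Sum>j<k. f (lf ((j+1) mod k)))"
    using sum_rot[OF k0, of "\<lambda>j. f (lf j)"] by simp
  also have "\<dots> = (\<Sum>j<k. f j)" by (rule sum.cong[OF refl]) (metis lf_rf lessThan_iff)
  finally show ?thesis .
qed

lemma rows: "(\<Sum>r<b*k. f (r div k) (r mod k)) = (\<Sum>i<b. \<Sum>j<k. f i j::real)"
proof -
  have "(\<Sum>r<b*k. f (r div k) (r mod k)) = (\<Sum>i<b. \<Sum>j<k. f ((i*k+j) div k) ((i*k+j) mod k))"
    by (rule sum_rows)
  also have "\<dots> = (\<Sum>i<b. \<Sum>j<k. f i j)"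
    by (rule sum.cong[OF refl], rule sum.cong[OF refl]) (simp add: divmod)
  finally show ?thesis .
qed

lemma blockcount: "i < b \<Longrightarrow> (\<Sum>j<k. if d i j = a then 1 else 0::real) = NN i a"
  unfolding NN_def using inj_count[OF inj] by simp

lemma cnt_R: "a < t \<Longrightarrow> (\<Sum>i<b. \<Sum>j<k. if d i j = a then 1 else 0::real) = R"
proof -
  obtain r where r: "\<forall>a<t. card {(i, j). i < b \<and> j < k \<and> d i j = a} = r"
    using cnbd unfolding CNBD_def balanced_block_def by blast
  have c: "a < t \<Longrightarrow> (\<Sum>i<b. \<Sum>j<k. if d i j = a then 1 else 0::real) = real r" for a
    using r card_as_sum[of b k "\<lambda>i j. d i j = a"] by simp
  have "(\<Sum>a<t. \<Sum>i<b. \<Sum>j<k. if d i j = a then 1 else 0::real) = (\<Sum>i<b. \<Sum>j<k. \<Sum>a<t. if d i j = a then 1 else 0::real)"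
    by (subst sum.swap, rule sum.cong[OF refl], rule sum.swap)
  also have "\<dots> = (\<Sum>i<b. \<Sum>j<k. 1::real)"
    by (rule sum.cong[OF refl], rule sum.cong[OF refl]) (simp add: des)
  finally have "real t * real r = real b * real k" using c by simp
  then have "real r = R" unfolding R_def using t3 by (simp add: field_simps)
  then show "a < t \<Longrightarrow> ?thesis" using c by simp
qed

end

context setting begin

lemma ind2: "(if P then 1 else 0::real) * (if P then 1 else 0) = (if P then 1 else 0)" by simp
lemma lf_rf': "j < k \<Longrightarrow> lf (Suc j mod k) = j" using lf_rf by simp

lemma G1: "a < t \<Longrightarrow> c < t \<Longrightarrow> (\<Sum>r<b*k. tt r a * tt r c) = (if a = c then R else 0)"
proof -
  assume a: "a < t" and c: "c < t"
  have "(\<Sum>r<b*k. tt r a * tt r c) = (\<Sum>i<b. \<Sum>j<k. (if d i j = a then 1 else 0) * (if d i j = c then 1 else 0))"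
    unfolding tt_def by (rule rows)
  also have "\<dots> = (if a = c then (\<Sum>i<b. \<Sum>j<k. if d i j = a then 1 else 0) else 0)"
    by (cases "a = c") (auto intro!: sum.neutral simp: ind2)
  finally show ?thesis using cnt_R[OF a] by (cases "a = c") simp_all
qed

lemma G2: "a < t \<Longrightarrow> c < t \<Longrightarrow> (\<Sum>r<b*k. ll r a * ll r c) = (if a = c then R else 0)"
proof -
  assume a: "a < t" and c: "c < t"
  have "(\<Sum>r<b*k. ll r a * ll r c) = (\<Sum>i<b. \<Sum>j<k. (if d i (lf j) = a then 1 else 0) * (if d i (lf j) = c then 1 else 0))"
    unfolding ll_def by (rule rows)
  also have "\<dots> = (\<Sum>i<b. \<Sum>j<k. (if d i j = a then 1 else 0) * (if d i j = c then 1 else 0))"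
    by (rule sum.cong[OF refl], rule sum_lf)
  also have "\<dots> = (if a = c then (\<Sum>i<b. \<Sum>j<k. if d i j = a then 1 else 0) else 0)"
    by (cases "a = c") (auto intro!: sum.neutral simp: ind2)
  finally show ?thesis using cnt_R[OF a] by (cases "a = c") simp_all
qed

lemma G3: "a < t \<Longrightarrow> c < t \<Longrightarrow> (\<Sum>r<b*k. tt r a * ll r c) = (if a = c then 0 else real l)"
proof -
  assume a: "a < t" and c: "c < t"
  have "(\<Sum>r<b*k. tt r a * ll r c) = (\<Sum>i<b. \<Sum>j<k. (if d i j = a then 1 else 0) * (if d i (lf j) = c then 1 else 0))"
    unfolding tt_def ll_def by (rule rows)
  also have "\<dots> = (if a = c then 0 else real l)"
  proof (cases "a = c")
    case True
    have "(if d i j = a then 1 else 0) * (if d i (lf j) = c then 1 else (0::real)) = 0"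
      if i: "i < b" and j: "j < k" for i j
    proof -
      have "d i j \<noteq> d i (lf j)"
        using inj[OF i] lf_neq[OF j] lf_lt j unfolding inj_on_def by (metis lessThan_iff)
      then show ?thesis using True by auto
    qed
    then show ?thesis using True by (simp add: sum.neutral)
  next
    case False
    have "(\<Sum>i<b. \<Sum>j<k. (if d i j = a then 1 else 0) * (if d i (lf j) = c then 1 else (0::real)))
      = (\<Sum>i<b. \<Sum>j<k. (if d i ((j+1) mod k) = a then 1 else 0) * (if d i (lf ((j+1) mod k)) = c then 1 else 0))"
      by (rule sum.cong[OF refl], rule sum_rot[OF k0, symmetric])
    also have "\<dots> = (\<Sum>i<b. \<Sum>j<k. if d i j = c \<and> right_nb k d i j = a then 1 else 0)"
      by (rule sum.cong[OF refl], rule sum.cong[OF refl]) (auto simp: lf_rf' right_nb_def)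
    also have "\<dots> = real (card {(i, j). i < b \<and> j < k \<and> d i j = c \<and> right_nb k d i j = a})"
      using card_as_sum[of b k "\<lambda>i j. d i j = c \<and> right_nb k d i j = a"] by simp
    also have "\<dots> = real l"
      using cnbd a c False unfolding CNBD_def neighbor_balanced_def by auto
    finally show ?thesis using False by simp
  qed
  finally show ?thesis .
qed

lemma G4: "i1 < b \<Longrightarrow> i2 < b \<Longrightarrow> (\<Sum>r<b*k. bb r i1 * bb r i2) = (if i1 = i2 then real k else 0)"
proof -
  assume i1: "i1 < b" and i2: "i2 < b"
  have "(\<Sum>r<b*k. bb r i1 * bb r i2) = (\<Sum>i<b. \<Sum>j<k. (if i = i1 then 1 else 0) * (if i = i2 then 1 else (0::real)))"
    unfolding bb_def by (rule rows)
  also have "\<dots> = (\<Sum>i<b. if i = i1 then (if i1 = i2 then real k else 0) else 0)"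
    by (rule sum.cong) auto
  finally show ?thesis using i1 by simp
qed

lemma G5: "a < t \<Longrightarrow> i1 < b \<Longrightarrow> (\<Sum>r<b*k. tt r a * bb r i1) = NN i1 a"
proof -
  assume a: "a < t" and i1: "i1 < b"
  have "(\<Sum>r<b*k. tt r a * bb r i1) = (\<Sum>i<b. \<Sum>j<k. (if d i j = a then 1 else 0) * (if i = i1 then 1 else (0::real)))"
    unfolding tt_def bb_def by (rule rows)
  also have "\<dots> = (\<Sum>i<b. if i = i1 then (\<Sum>j<k. if d i j = a then 1 else 0) else 0)"
    by (rule sum.cong) auto
  finally show ?thesis using i1 blockcount[OF i1] by simp
qed

lemma G5': "a < t \<Longrightarrow> i1 < b \<Longrightarrow> (\<Sum>r<b*k. ll r a * bb r i1) = NN i1 a"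
proof -
  assume a: "a < t" and i1: "i1 < b"
  have "(\<Sum>r<b*k. ll r a * bb r i1) = (\<Sum>i<b. \<Sum>j<k. (if d i (lf j) = a then 1 else 0) * (if i = i1 then 1 else (0::real)))"
    unfolding ll_def bb_def by (rule rows)
  also have "\<dots> = (\<Sum>i<b. if i = i1 then (\<Sum>j<k. if d i (lf j) = a then 1 else 0) else 0)"
    by (rule sum.cong) auto
  also have "\<dots> = (\<Sum>i<b. if i = i1 then (\<Sum>j<k. if d i j = a then 1 else 0) else 0)"
  proof -
    have "(\<Sum>j<k. if d i (lf j) = a then 1 else 0) = (\<Sum>j<k. if d i j = a then 1 else (0::real))" for i
      using sum_lf[of "\<lambda>j. if d i j = a then 1 else 0"] by simp
    then show ?thesis by simp
  qed
  finally show ?thesis using i1 blockcount[OF i1] by simp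
qed

lemma NN_sum: "a < t \<Longrightarrow> (\<Sum>i<b. NN i a) = R"
  using cnt_R[of a] blockcount by simp

lemma NN_rowsum: "i < b \<Longrightarrow> (\<Sum>c<t. NN i c) = real k"
proof -
  assume i: "i < b"
  have "(\<Sum>c<t. NN i c) = (\<Sum>c<t. \<Sum>j<k. if d i j = c then 1 else 0)"
    using blockcount[OF i] by simp
  also have "\<dots> = (\<Sum>j<k. \<Sum>c<t. if d i j = c then 1 else 0)" by (rule sum.swap)
  also have "\<dots> = (\<Sum>j<k. 1)" by (rule sum.cong[OF refl]) (simp add: des[OF i])
  finally show ?thesis by simp
qed

lemma G6: "a < t \<Longrightarrow> c < t \<Longrightarrow> (\<Sum>i<b. NN i a * NN i c) = (if a = c then R else lam)"
proof -
  assume a: "a < t" and c: "c < t"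
  obtain \<mu> where mu: "\<forall>a<t. \<forall>c<t. a \<noteq> c \<longrightarrow>
         card {i. i < b \<and> a \<in> d i ` {..<k} \<and> c \<in> d i ` {..<k}} = \<mu>"
    using cnbd unfolding CNBD_def balanced_block_def by blast
  have NN2: "NN i a * NN i a = NN i a" for i a by (simp add: NN_def)
  have off: "(\<Sum>i<b. NN i a * NN i c) = real \<mu>" if "a < t" "c < t" "a \<noteq> c" for a c
  proof -
    have "(\<Sum>i<b. NN i a * NN i c) = (\<Sum>i<b. if a \<in> d i ` {..<k} \<and> c \<in> d i ` {..<k} then 1 else 0)"
      unfolding NN_def by (rule sum.cong) auto
    also have "\<dots> = real (card {i\<in>{..<b}. a \<in> d i ` {..<k} \<and> c \<in> d i ` {..<k}})"
      by (simp add: sum.inter_filter[symmetric])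
    also have "{i\<in>{..<b}. a \<in> d i ` {..<k} \<and> c \<in> d i ` {..<k}} = {i. i < b \<and> a \<in> d i ` {..<k} \<and> c \<in> d i ` {..<k}}"
      by auto
    finally show ?thesis using mu that by simp
  qed
  have diag: "(\<Sum>i<b. NN i a * NN i a) = R" if "a < t" for a using NN_sum[OF that] by (simp only: NN2)
  have "(\<Sum>c<t. \<Sum>i<b. NN i a * NN i c) = (\<Sum>i<b. NN i a * (\<Sum>c<t. NN i c))"
    by (subst sum.swap) (simp add: sum_distrib_left)
  also have "\<dots> = (\<Sum>i<b. NN i a * real k)" by (rule sum.cong[OF refl]) (simp add: NN_rowsum)
  also have "\<dots> = real k * R" using NN_sum[OF a] by (simp add: sum_distrib_left[symmetric] mult.commute)
  finally have e1: "(\<Sum>c<t. \<Sum>i<b. NN i a * NN i c) = real k * R" .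
  have "(\<Sum>c<t. \<Sum>i<b. NN i a * NN i c) = (\<Sum>c<t. (if c = a then R - real \<mu> else 0) + real \<mu>)"
    by (rule sum.cong[OF refl]) (auto simp: diag a off)
  also have "\<dots> = R - real \<mu> + real t * real \<mu>" using a by (simp add: sum.distrib)
  finally have "R - real \<mu> + real t * real \<mu> = real k * R" using e1 by simp
  then have "real \<mu> = lam" unfolding lam_def using t3 by (simp add: field_simps)
  then show ?thesis using off[OF a c] diag[OF a] by auto
qed

end

definition sg :: "nat \<Rightarrow> nat \<Rightarrow> real" where "sg t p = (if p < t then 1 else -1)"

definition mk :: "nat \<Rightarrow> nat \<Rightarrow> real \<Rightarrow> real \<Rightarrow> real \<Rightarrow> real mat" where
  "mk t b \<alpha> \<beta> \<gamma> = mat (2*t+b) (2*t+b) (\<lambda>(p,q).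
     if p < 2*t \<and> q < 2*t then sg t p * sg t q * ((if p mod t = q mod t then \<alpha> else 0) + \<beta>)
     else if 2*t \<le> p \<and> 2*t \<le> q then (if p = q then \<gamma> else 0) else 0)"

lemma mk_carrier: "mk t b \<alpha> \<beta> \<gamma> \<in> carrier_mat (2*t+b) (2*t+b)" by (simp add: mk_def)
lemma mk_dim[simp]: "dim_row (mk t b \<alpha> \<beta> \<gamma>) = 2*t+b" "dim_col (mk t b \<alpha> \<beta> \<gamma>) = 2*t+b"
  by (simp_all add: mk_def)

lemma mk_entry: "p < 2*t+b \<Longrightarrow> q < 2*t+b \<Longrightarrow> mk t b \<alpha> \<beta> \<gamma> $$ (p,q) =
     (if p < 2*t \<and> q < 2*t then sg t p * sg t q * ((if p mod t = q mod t then \<alpha> else 0) + \<beta>)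
     else if 2*t \<le> p \<and> 2*t \<le> q then (if p = q then \<gamma> else 0) else 0)"
  by (simp add: mk_def)

lemma mk_lo: "p < 2*t \<Longrightarrow> q < 2*t \<Longrightarrow> mk t b \<alpha> \<beta> \<gamma> $$ (p,q) =
     sg t p * sg t q * ((if p mod t = q mod t then \<alpha> else 0) + \<beta>)"
  by (simp add: mk_def)

lemma mk_zero: "p < 2*t+b \<Longrightarrow> q < 2*t+b \<Longrightarrow> (p < 2*t) \<noteq> (q < 2*t) \<Longrightarrow> mk t b \<alpha> \<beta> \<gamma> $$ (p,q) = 0"
  by (auto simp add: mk_def)

lemma mk_hi: "p < 2*t+b \<Longrightarrow> q < 2*t+b \<Longrightarrow> 2*t \<le> p \<Longrightarrow> 2*t \<le> q \<Longrightarrow> mk t b \<alpha> \<beta> \<gamma> $$ (p,q) = (if p = q then \<gamma> else 0)"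
  by (simp add: mk_def)

lemma mk_transpose: "transpose_mat (mk t b \<alpha> \<beta> \<gamma>) = mk t b \<alpha> \<beta> \<gamma>"
  by (rule eq_matI) (auto simp: mk_entry)

lemma inner_sum:
  fixes x y t :: nat
  assumes "x < t" "y < t"
  shows "(\<Sum>q<t. ((if x = q then \<alpha> else 0) + \<beta>) * ((if q = y then \<alpha>' else 0) + \<beta>'))
    = (if x = y then \<alpha> * \<alpha>' else 0) + \<alpha> * \<beta>' + \<beta> * \<alpha>' + real t * \<beta> * \<beta>'"
proof -
  have "(\<Sum>q<t. ((if x = q then \<alpha> else 0) + \<beta>) * ((if q = y then \<alpha>' else 0) + \<beta>'))
    = (\<Sum>q<t. (if x = q then (if q = y then \<alpha> * \<alpha>' else 0) else 0) + (if x = q then \<alpha> * \<beta>' else 0)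
         + (if q = y then \<beta> * \<alpha>' else 0) + \<beta> * \<beta>')"
    by (rule sum.cong) (auto simp: algebra_simps)
  also have "\<dots> = (if x = y then \<alpha> * \<alpha>' else 0) + \<alpha> * \<beta>' + \<beta> * \<alpha>' + real t * \<beta> * \<beta>'"
    using assms by (simp add: sum.distrib)
  finally show ?thesis .
qed

lemma mk_mult: assumes t: "0 < t"
  shows "mk t b \<alpha> \<beta> \<gamma> * mk t b \<alpha>' \<beta>' \<gamma>' = mk t b (2*\<alpha>*\<alpha>') (2*(\<alpha>*\<beta>' + \<beta>*\<alpha>' + real t*\<beta>*\<beta>')) (\<gamma>*\<gamma>')"
proof (rule eq_matI)
  fix p s assume p: "p < dim_row (mk t b (2*\<alpha>*\<alpha>') (2*(\<alpha>*\<beta>' + \<beta>*\<alpha>' + real t*\<beta>*\<beta>')) (\<gamma>*\<gamma>'))"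
    and s: "s < dim_col (mk t b (2*\<alpha>*\<alpha>') (2*(\<alpha>*\<beta>' + \<beta>*\<alpha>' + real t*\<beta>*\<beta>')) (\<gamma>*\<gamma>'))"
  then have p: "p < 2*t+b" and s: "s < 2*t+b" by auto
  define f where "f q = mk t b \<alpha> \<beta> \<gamma> $$ (p,q) * mk t b \<alpha>' \<beta>' \<gamma>' $$ (q,s)" for q
  have "(mk t b \<alpha> \<beta> \<gamma> * mk t b \<alpha>' \<beta>' \<gamma>') $$ (p,s) = (\<Sum>q<2*t+b. f q)"
    unfolding f_def using p s by (subst mult_entry) simp_all
  also have "\<dots> = (\<Sum>q<t. f q) + (\<Sum>q<t. f (q + t)) + (\<Sum>q<b. f (q + 2*t))" by (rule sum_split3)
  also have "\<dots> = mk t b (2*\<alpha>*\<alpha>') (2*(\<alpha>*\<beta>' + \<beta>*\<alpha>' + real t*\<beta>*\<beta>')) (\<gamma>*\<gamma>') $$ (p,s)"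
  proof (cases "p < 2*t \<and> s < 2*t")
    case True
    define x y where "x = p mod t" and "y = s mod t"
    have xy: "x < t" "y < t" using t by (auto simp: x_def y_def)
    have f1: "f q = sg t p * sg t s * (((if x = q then \<alpha> else 0) + \<beta>) * ((if q = y then \<alpha>' else 0) + \<beta>'))"
      if "q < t" for q
    proof -
      have "f q = (sg t p * 1 * ((if x = q then \<alpha> else 0) + \<beta>)) * (1 * sg t s * ((if q = y then \<alpha>' else 0) + \<beta>'))"
        unfolding f_def using that True by (simp add: mk_lo sg_def x_def y_def)
      then show ?thesis by (simp only: mult_ac mult_1_right mult_1_left)
    qed
    have f2: "f (q + t) = sg t p * sg t s * (((if x = q then \<alpha> else 0) + \<beta>) * ((if q = y then \<alpha>' else 0) + \<beta>'))"
      if "q < t" for q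
    proof -
      have "f (q + t) = (sg t p * (-1) * ((if x = q then \<alpha> else 0) + \<beta>)) * ((-1) * sg t s * ((if q = y then \<alpha>' else 0) + \<beta>'))"
        unfolding f_def using that True by (simp add: mk_lo sg_def x_def y_def)
      then show ?thesis by simp
    qed
    have f3': "f (q + 2*t) = 0" if "q < b" for q
      using True p s that unfolding f_def by (auto simp: mk_entry)
    have f3: "(\<Sum>q<b. f (q + 2*t)) = 0" by (rule sum.neutral) (simp add: f3')
    define c where "c = sg t p * sg t s"
    define I where "I = (\<Sum>q<t. ((if x = q then \<alpha> else 0) + \<beta>) * ((if q = y then \<alpha>' else 0) + \<beta>'))"
    have s1: "(\<Sum>q<t. f q) = c * I" unfolding I_def c_def sum_distrib_left
      by (rule sum.cong[OF refl]) (simp add: f1)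
    have s2: "(\<Sum>q<t. f (q + t)) = c * I" unfolding I_def c_def sum_distrib_left
      by (rule sum.cong[OF refl]) (simp add: f2)
    have I: "I = (if x = y then \<alpha> * \<alpha>' else 0) + \<alpha> * \<beta>' + \<beta> * \<alpha>' + real t * \<beta> * \<beta>'"
      unfolding I_def by (rule inner_sum[OF xy])
    have rhs: "mk t b (2*\<alpha>*\<alpha>') (2*(\<alpha>*\<beta>' + \<beta>*\<alpha>' + real t*\<beta>*\<beta>')) (\<gamma>*\<gamma>') $$ (p,s)
       = c * ((if x = y then 2*\<alpha>*\<alpha>' else 0) + 2*(\<alpha>*\<beta>' + \<beta>*\<alpha>' + real t*\<beta>*\<beta>'))"
      using True p s unfolding c_def x_def y_def by (simp add: mk_entry)
    show ?thesis unfolding rhs s1 s2 f3 I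
      by (cases "x = y") (simp_all add: ring_distribs)
  next
    case False
    have f1: "f q = 0" if "q < 2*t" for q
    proof (cases "p < 2*t")
      case True
      then have "\<not> s < 2*t" using False by simp
      then show ?thesis unfolding f_def using that p s by (simp add: mk_zero)
    next
      case False
      then show ?thesis unfolding f_def using that p s by (simp add: mk_zero)
    qed
    have s1: "(\<Sum>q<t. f q) = 0" by (rule sum.neutral) (simp add: f1)
    have s2: "(\<Sum>q<t. f (q + t)) = 0" by (rule sum.neutral) (simp add: f1)
    have s3: "(\<Sum>q<b. f (q + 2*t)) = mk t b (2*\<alpha>*\<alpha>') (2*(\<alpha>*\<beta>' + \<beta>*\<alpha>' + real t*\<beta>*\<beta>')) (\<gamma>*\<gamma>') $$ (p,s)"
    proof (cases "2*t \<le> p \<and> 2*t \<le> s")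
      case True
      have "(\<Sum>q<b. f (q + 2*t)) = (\<Sum>q<b. if q = p - 2*t then (if p = s then \<gamma> * \<gamma>' else 0) else 0)"
        by (rule sum.cong[OF refl]) (use True p s in \<open>auto simp: f_def mk_hi\<close>)
      also have "\<dots> = (if p = s then \<gamma> * \<gamma>' else 0)" using p True by auto
      finally show ?thesis using True p s by (simp add: mk_hi)
    next
      case F2: False
      have "f (q + 2*t) = 0" if "q < b" for q
      proof (cases "p < 2*t")
        case True
        then show ?thesis unfolding f_def using that p s by (simp add: mk_zero)
      next
        case False
        then have "s < 2*t" using F2 by simp
        then show ?thesis unfolding f_def using that p s by (simp add: mk_zero)
      qed
      then have "(\<Sum>q<b. f (q + 2*t)) = 0" by (simp add: sum.neutral)
      moreover have "mk t b (2*\<alpha>*\<alpha>') (2*(\<alpha>*\<beta>' + \<beta>*\<alpha>' + real t*\<beta>*\<beta>')) (\<gamma>*\<gamma>') $$ (p,s) = 0"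
        using F2 False p s by (intro mk_zero) auto
      ultimately show ?thesis by simp
    qed
    show ?thesis using s1 s2 s3 by simp
  qed
  finally show "(mk t b \<alpha> \<beta> \<gamma> * mk t b \<alpha>' \<beta>' \<gamma>') $$ (p,s) = mk t b (2*\<alpha>*\<alpha>') (2*(\<alpha>*\<beta>' + \<beta>*\<alpha>' + real t*\<beta>*\<beta>')) (\<gamma>*\<gamma>') $$ (p,s)" .
qed (auto)

lemma sI_mult: "(c \<cdot>\<^sub>m 1\<^sub>m n) * (c' \<cdot>\<^sub>m 1\<^sub>m n) = (c * c') \<cdot>\<^sub>m (1\<^sub>m n :: real mat)"
proof (rule eq_matI)
  fix i j assume "i < dim_row ((c * c') \<cdot>\<^sub>m (1\<^sub>m n :: real mat))" "j < dim_col ((c * c') \<cdot>\<^sub>m (1\<^sub>m n :: real mat))"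
  then have i: "i < n" and j: "j < n" by auto
  have "((c \<cdot>\<^sub>m 1\<^sub>m n) * (c' \<cdot>\<^sub>m 1\<^sub>m n)) $$ (i,j) = (\<Sum>p<n. (c \<cdot>\<^sub>m (1\<^sub>m n :: real mat)) $$ (i,p) * (c' \<cdot>\<^sub>m 1\<^sub>m n) $$ (p,j))"
    using i j by (subst mult_entry) auto
  also have "\<dots> = (\<Sum>p<n. if p = i then (if i = j then c * c' else 0) else 0)"
    by (rule sum.cong[OF refl]) (use i j in auto)
  finally show "((c \<cdot>\<^sub>m 1\<^sub>m n) * (c' \<cdot>\<^sub>m 1\<^sub>m n)) $$ (i,j) = ((c * c') \<cdot>\<^sub>m (1\<^sub>m n :: real mat)) $$ (i,j)"
    using i j by simp
qed auto

lemma hcat_entry: "r < dim_row X \<Longrightarrow> c < dim_col X + dim_col Y \<Longrightarrow>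
   hcat X Y $$ (r,c) = (if c < dim_col X then X $$ (r,c) else Y $$ (r, c - dim_col X))"
  by (simp add: hcat_def)
lemma hcat_dim[simp]: "dim_row (hcat X Y) = dim_row X" "dim_col (hcat X Y) = dim_col X + dim_col Y"
  by (simp_all add: hcat_def)

lemma mp_inv_sI: "c \<noteq> 0 \<Longrightarrow> mp_inv (c \<cdot>\<^sub>m 1\<^sub>m n) = (1/c) \<cdot>\<^sub>m 1\<^sub>m n"
proof -
  have tr: "transpose_mat (a \<cdot>\<^sub>m 1\<^sub>m n) = a \<cdot>\<^sub>m (1\<^sub>m n :: real mat)" for a
    by (rule eq_matI) auto
  assume "c \<noteq> 0"
  then show ?thesis by (intro mp_inv_eq) (simp add: penrose_def sI_mult tr)
qed

context setting begin

definition ell :: real where "ell = real l"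
definition X1e :: "real mat" where "X1e = mat (b*k) t (\<lambda>(r,a). (tt r a + ll r a)/2)"
definition X2e :: "real mat" where "X2e = mat (b*k) (2*t+b) (\<lambda>(r,p).
   if p < 2*t then sg t p * (tt r (p mod t) - ll r (p mod t)) / 2 else bb r (p - 2*t))"

lemma T_eq: "T_mat t b k d = mat (b*k) t (\<lambda>(r,a). tt r a)"
  unfolding T_mat_def tt_def by simp
lemma L_eq: "L_mat t b k d = mat (b*k) t (\<lambda>(r,a). ll r a)"
  unfolding L_mat_def ll_def left_nb_def lf_def by simp
lemma B_eq: "B_mat b k = mat (b*k) b (\<lambda>(r,i). bb r i)"
  unfolding B_mat_def bb_def by simp

lemma T_entry: "r < b*k \<Longrightarrow> a < t \<Longrightarrow> T_mat t b k d $$ (r,a) = tt r a" by (simp add: T_eq)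
lemma L_entry: "r < b*k \<Longrightarrow> a < t \<Longrightarrow> L_mat t b k d $$ (r,a) = ll r a" by (simp add: L_eq)
lemma B_entry: "r < b*k \<Longrightarrow> i < b \<Longrightarrow> B_mat b k $$ (r,i) = bb r i" by (simp add: B_eq)
lemma TLB_dim[simp]: "dim_row (T_mat t b k d) = b*k" "dim_col (T_mat t b k d) = t"
  "dim_row (L_mat t b k d) = b*k" "dim_col (L_mat t b k d) = t"
  "dim_row (B_mat b k) = b*k" "dim_col (B_mat b k) = b"
  "dim_row (K_mat t) = 2*t" "dim_col (K_mat t) = t"
  by (simp_all add: T_eq L_eq B_eq K_mat_def)

lemma t0: "0 < t" using t3 by simp

lemma K_entry: "p < 2*t \<Longrightarrow> c < t \<Longrightarrow> K_mat t $$ (p,c) = (if p mod t = c then 1 else 0)"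
  by (simp add: K_mat_def)

lemma KtK: "transpose_mat (K_mat t) * K_mat t = 2 \<cdot>\<^sub>m 1\<^sub>m t"
proof (rule eq_matI)
  fix a c assume "a < dim_row (2 \<cdot>\<^sub>m (1\<^sub>m t :: real mat))" "c < dim_col (2 \<cdot>\<^sub>m (1\<^sub>m t :: real mat))"
  then have a: "a < t" and c: "c < t" by auto
  define f where "f p = K_mat t $$ (p,a) * K_mat t $$ (p,c)" for p
  have "(transpose_mat (K_mat t) * K_mat t) $$ (a,c) = (\<Sum>p<2*t. f p)"
    unfolding f_def using a c by (subst mult_entry) (auto simp: K_mat_def)
  also have "\<dots> = (\<Sum>p<t. f p) + (\<Sum>p<t. f (p + t))" by (rule sum_split2)
  also have "(\<Sum>p<t. f p) = (\<Sum>p<t. if p = a then (if a = c then 1 else 0) else 0)"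
    by (rule sum.cong[OF refl]) (use a c in \<open>auto simp: f_def K_entry\<close>)
  also have "(\<Sum>p<t. f (p + t)) = (\<Sum>p<t. if p = a then (if a = c then 1 else 0) else 0)"
    by (rule sum.cong[OF refl]) (use a c in \<open>auto simp: f_def K_entry\<close>)
  finally show "(transpose_mat (K_mat t) * K_mat t) $$ (a,c) = (2 \<cdot>\<^sub>m (1\<^sub>m t :: real mat)) $$ (a,c)"
    using a c by simp
qed (auto simp: K_mat_def)

lemma KKp: "mp_inv (transpose_mat (K_mat t) * K_mat t) = (1/2) \<cdot>\<^sub>m 1\<^sub>m t"
  unfolding KtK by (simp add: mp_inv_sI)

lemma AK: "hcat (T_mat t b k d) (L_mat t b k d) * K_mat t = mat (b*k) t (\<lambda>(r,a). tt r a + ll r a)"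
proof (rule eq_matI)
  fix r a assume "r < dim_row (mat (b*k) t (\<lambda>(r,a). tt r a + ll r a))" "a < dim_col (mat (b*k) t (\<lambda>(r,a). tt r a + ll r a))"
  then have r: "r < b*k" and a: "a < t" by auto
  define f where "f p = hcat (T_mat t b k d) (L_mat t b k d) $$ (r,p) * K_mat t $$ (p,a)" for p
  have "(hcat (T_mat t b k d) (L_mat t b k d) * K_mat t) $$ (r,a) = (\<Sum>p<2*t. f p)"
    unfolding f_def using r a by (subst mult_entry) auto
  also have "\<dots> = (\<Sum>p<t. f p) + (\<Sum>p<t. f (p + t))" by (rule sum_split2)
  also have "(\<Sum>p<t. f p) = (\<Sum>p<t. if p = a then tt r a else 0)"
    by (rule sum.cong[OF refl]) (use r a in \<open>auto simp: f_def K_entry hcat_entry T_entry L_entry\<close>)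
  also have "(\<Sum>p<t. f (p + t)) = (\<Sum>p<t. if p = a then ll r a else 0)"
    by (rule sum.cong[OF refl]) (use r a in \<open>auto simp: f_def K_entry hcat_entry T_entry L_entry\<close>)
  finally show "(hcat (T_mat t b k d) (L_mat t b k d) * K_mat t) $$ (r,a) = mat (b*k) t (\<lambda>(r,a). tt r a + ll r a) $$ (r,a)"
    using r a by simp
qed auto

lemma mult_halfI: "A \<in> carrier_mat n m \<Longrightarrow> A * ((1/2) \<cdot>\<^sub>m 1\<^sub>m m) = (1/2) \<cdot>\<^sub>m (A :: real mat)"
  by (metis mult_smult_distrib one_carrier_mat right_mult_one_mat)

lemma X1_eq: "hcat (T_mat t b k d) (L_mat t b k d) * K_mat t * ((1/2) \<cdot>\<^sub>m 1\<^sub>m t) = X1e"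
proof -
  have c: "mat (b*k) t (\<lambda>(r,a). tt r a + ll r a) \<in> carrier_mat (b*k) t" by simp
  show ?thesis unfolding AK mult_halfI[OF c] X1e_def by (rule eq_matI) auto
qed

lemma X1e_carrier: "X1e \<in> carrier_mat (b*k) t" by (simp add: X1e_def)
lemma X2e_carrier: "X2e \<in> carrier_mat (b*k) (2*t+b)" by (simp add: X2e_def)

lemma AM: "hcat (T_mat t b k d) (L_mat t b k d) *
    (1\<^sub>m (2*t) - K_mat t * ((1/2) \<cdot>\<^sub>m 1\<^sub>m t) * transpose_mat (K_mat t))
  = mat (b*k) (2*t) (\<lambda>(r,q). sg t q * (tt r (q mod t) - ll r (q mod t)) / 2)"
proof -
  define A where "A = hcat (T_mat t b k d) (L_mat t b k d)"
  define K where "K = K_mat t"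
  define H where "H = (1/2) \<cdot>\<^sub>m (1\<^sub>m t :: real mat)"
  have cA: "A \<in> carrier_mat (b*k) (2*t)" unfolding A_def carrier_mat_def hcat_dim TLB_dim mem_Collect_eq by (simp only: mult_2 simp_thms)
  have cK: "K \<in> carrier_mat (2*t) t" unfolding K_def carrier_mat_def TLB_dim mem_Collect_eq by (simp only: simp_thms)
  have cH: "H \<in> carrier_mat t t" unfolding H_def by (rule smult_carrier_mat[OF one_carrier_mat])
  have cKt: "transpose_mat K \<in> carrier_mat t (2*t)" using cK by (simp only: transpose_carrier_mat)
  have cKH: "K * H \<in> carrier_mat (2*t) t" by (rule mult_carrier_mat[OF cK cH])
  have cKHKt: "K * H * transpose_mat K \<in> carrier_mat (2*t) (2*t)" by (rule mult_carrier_mat[OF cKH cKt])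
  have "A * (1\<^sub>m (2*t) - K * H * transpose_mat K) = A * 1\<^sub>m (2*t) - A * (K * H * transpose_mat K)"
    by (rule mult_minus_distrib_mat[OF cA one_carrier_mat cKHKt])
  also have "A * 1\<^sub>m (2*t) = A" by (rule right_mult_one_mat[OF cA])
  also have "A * (K * H * transpose_mat K) = (A * (K * H)) * transpose_mat K"
    by (rule assoc_mult_mat[OF cA cKH cKt, symmetric])
  also have "A * (K * H) = A * K * H"
    by (rule assoc_mult_mat[OF cA cK cH, symmetric])
  also have "A * K * H = X1e" unfolding A_def K_def H_def by (rule X1_eq)
  finally have e: "A * (1\<^sub>m (2*t) - K * H * transpose_mat K) = A - X1e * transpose_mat K" .
  have "A - X1e * transpose_mat K = mat (b*k) (2*t) (\<lambda>(r,q). sg t q * (tt r (q mod t) - ll r (q mod t)) / 2)"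
  proof (rule eq_matI)
    fix r q assume "r < dim_row (mat (b*k) (2*t) (\<lambda>(r,q). sg t q * (tt r (q mod t) - ll r (q mod t)) / 2))"
      "q < dim_col (mat (b*k) (2*t) (\<lambda>(r,q). sg t q * (tt r (q mod t) - ll r (q mod t)) / 2))"
    then have r: "r < b*k" and q: "q < 2*t" by auto
    have qm: "q mod t < t" using t0 by simp
    have "(X1e * transpose_mat K) $$ (r,q) = (\<Sum>a<t. X1e $$ (r,a) * transpose_mat K $$ (a,q))"
      using r q cK by (subst mult_entry) (auto simp: X1e_def)
    also have "\<dots> = (\<Sum>a<t. if a = q mod t then (tt r (q mod t) + ll r (q mod t))/2 else 0)"
      by (rule sum.cong[OF refl]) (use r q in \<open>auto simp: X1e_def K_def K_entry\<close>)
    also have "\<dots> = (tt r (q mod t) + ll r (q mod t))/2" using qm by simp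
    finally have x: "(X1e * transpose_mat K) $$ (r,q) = (tt r (q mod t) + ll r (q mod t))/2" .
    have a: "A $$ (r,q) = (if q < t then tt r q else ll r (q - t))"
      unfolding A_def using r q by (simp add: hcat_entry T_entry L_entry)
    show "(A - X1e * transpose_mat K) $$ (r,q) = mat (b*k) (2*t) (\<lambda>(r,q). sg t q * (tt r (q mod t) - ll r (q mod t)) / 2) $$ (r,q)"
    proof -
      have m: "(A - X1e * transpose_mat K) $$ (r,q) = A $$ (r,q) - (X1e * transpose_mat K) $$ (r,q)"
        using r q unfolding K_def by (intro index_minus_mat(1)) (simp_all add: X1e_def)
      show ?thesis
      proof (cases "q < t")
        case True
        then show ?thesis using r q x a unfolding m by (simp add: sg_def field_simps)
      next
        case False
        then have "q mod t = q - t" using q by (simp add: le_mod_geq mod_if)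
        then show ?thesis using False r q x a unfolding m by (simp add: sg_def field_simps)
      qed
    qed
  qed (use cA cK in \<open>auto simp: X1e_def\<close>)
  from trans[OF e this] show ?thesis unfolding A_def K_def H_def .
qed

lemma X2_eq: "hcat (hcat (T_mat t b k d) (L_mat t b k d) *
    (1\<^sub>m (2*t) - K_mat t * ((1/2) \<cdot>\<^sub>m 1\<^sub>m t) * transpose_mat (K_mat t))) (B_mat b k) = X2e"
  unfolding AM X2e_def
  by (rule eq_matI) (auto simp: hcat_entry B_entry)

end

context setting begin

lemma tm1: "real (t - 1) = real t - 1" using t3 by simp
lemma R_ell: "R = ell * (real t - 1)"
proof -
  have "real (t * (t - 1)) = real t * (real t - 1)" using t3 by simp
  then show ?thesis unfolding R_def ell_def lval using t3 by (simp add: field_simps)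
qed
lemma ell_val: "ell = real b * real k / (real t * (real t - 1))"
proof -
  have "real (t * (t - 1)) = real t * (real t - 1)" using t3 by simp
  then show ?thesis unfolding ell_def lval by simp
qed
lemma ell_pos: "ell > 0" unfolding ell_val using t3 b0 k3 by simp

lemma G3s: "a < t \<Longrightarrow> c < t \<Longrightarrow> (\<Sum>r<b*k. ll r a * tt r c) = (if a = c then 0 else ell)"
  using G3[of c a] by (auto simp: mult.commute ell_def)

lemma X2e_lo: "r < b*k \<Longrightarrow> p < 2*t \<Longrightarrow> X2e $$ (r,p) = sg t p * (tt r (p mod t) - ll r (p mod t)) / 2"
  by (simp add: X2e_def)
lemma X2e_hi: "r < b*k \<Longrightarrow> p < 2*t+b \<Longrightarrow> 2*t \<le> p \<Longrightarrow> X2e $$ (r,p) = bb r (p - 2*t)"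
  by (simp add: X2e_def)
lemma X1e_entry: "r < b*k \<Longrightarrow> a < t \<Longrightarrow> X1e $$ (r,a) = (tt r a + ll r a) / 2"
  by (simp add: X1e_def)
lemma X12_dim[simp]: "dim_row X1e = b*k" "dim_col X1e = t" "dim_row X2e = b*k" "dim_col X2e = 2*t+b"
  by (simp_all add: X1e_def X2e_def)

definition Sm where "Sm = mk t b (ell * real t / 2) (- ell / 2) (real k)"

lemma S_eq: "transpose_mat X2e * X2e = Sm"
proof (rule eq_matI)
  fix p q assume "p < dim_row Sm" "q < dim_col Sm"
  then have p: "p < 2*t+b" and q: "q < 2*t+b" by (auto simp: Sm_def)
  have e: "(transpose_mat X2e * X2e) $$ (p,q) = (\<Sum>r<b*k. X2e $$ (r,p) * X2e $$ (r,q))"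
    using p q by (subst mult_entry) auto
  show "(transpose_mat X2e * X2e) $$ (p,q) = Sm $$ (p,q)"
  proof (cases "p < 2*t")
    case pl: True
    define p' where "p' = p mod t"
    have p': "p' < t" using t0 by (simp add: p'_def)
    show ?thesis
    proof (cases "q < 2*t")
      case ql: True
      define q' where "q' = q mod t"
      have q': "q' < t" using t0 by (simp add: q'_def)
      have "(\<Sum>r<b*k. X2e $$ (r,p) * X2e $$ (r,q)) = (\<Sum>r<b*k. sg t p * sg t q / 4 *
          (tt r p' * tt r q' - tt r p' * ll r q' - ll r p' * tt r q' + ll r p' * ll r q'))"
      proof (rule sum.cong[OF refl])
        fix r assume "r \<in> {..<b*k}"
        then have r: "r < b*k" by simp
        show "X2e $$ (r,p) * X2e $$ (r,q) = sg t p * sg t q / 4 *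
          (tt r p' * tt r q' - tt r p' * ll r q' - ll r p' * tt r q' + ll r p' * ll r q')"
          unfolding X2e_lo[OF r pl] X2e_lo[OF r ql] p'_def q'_def by (simp add: field_simps)
      qed
      also have "\<dots> = sg t p * sg t q / 4 * ((\<Sum>r<b*k. tt r p' * tt r q') - (\<Sum>r<b*k. tt r p' * ll r q')
          - (\<Sum>r<b*k. ll r p' * tt r q') + (\<Sum>r<b*k. ll r p' * ll r q'))"
      proof -
        define c where "c = sg t p * sg t q / 4"
        have "(\<Sum>r<b*k. c * (tt r p' * tt r q' - tt r p' * ll r q' - ll r p' * tt r q' + ll r p' * ll r q'))
          = c * (\<Sum>r<b*k. tt r p' * tt r q' - tt r p' * ll r q' - ll r p' * tt r q' + ll r p' * ll r q')"
          by (rule sum_distrib_left[symmetric])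
        also have "(\<Sum>r<b*k. tt r p' * tt r q' - tt r p' * ll r q' - ll r p' * tt r q' + ll r p' * ll r q')
          = (\<Sum>r<b*k. tt r p' * tt r q') - (\<Sum>r<b*k. tt r p' * ll r q')
          - (\<Sum>r<b*k. ll r p' * tt r q') + (\<Sum>r<b*k. ll r p' * ll r q')"
          by (simp add: sum.distrib sum_subtractf)
        finally show ?thesis unfolding c_def .
      qed
      also have "\<dots> = sg t p * sg t q * ((if p' = q' then ell * real t / 2 else 0) + - ell / 2)"
        using p' q' by (simp add: G1 G2 G3 G3s R_ell ell_def[symmetric] field_simps)
      also have "\<dots> = Sm $$ (p,q)" unfolding Sm_def using pl ql by (simp add: mk_lo p'_def q'_def)
      finally show ?thesis using e by simp
    next
      case qh: False
      have "(\<Sum>r<b*k. X2e $$ (r,p) * X2e $$ (r,q)) = (\<Sum>r<b*k. sg t p / 2 *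
          (tt r p' * bb r (q - 2*t) - ll r p' * bb r (q - 2*t)))"
      proof (rule sum.cong[OF refl])
        fix r assume "r \<in> {..<b*k}"
        then have r: "r < b*k" by simp
        have qq: "2*t \<le> q" using qh by simp
        show "X2e $$ (r,p) * X2e $$ (r,q) = sg t p / 2 *
          (tt r p' * bb r (q - 2*t) - ll r p' * bb r (q - 2*t))"
          unfolding X2e_lo[OF r pl] X2e_hi[OF r q qq] p'_def by (simp add: field_simps)
      qed
      also have "\<dots> = sg t p / 2 * ((\<Sum>r<b*k. tt r p' * bb r (q - 2*t)) - (\<Sum>r<b*k. ll r p' * bb r (q - 2*t)))"
      proof -
        define c where "c = sg t p / 2"
        show ?thesis unfolding c_def[symmetric] by (simp add: sum_distrib_left[symmetric] sum_subtractf)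
      qed
      also have "\<dots> = 0" using p' q qh by (simp add: G5 G5')
      also have "\<dots> = Sm $$ (p,q)" unfolding Sm_def using pl qh p q by (simp add: mk_zero)
      finally show ?thesis using e by simp
    qed
  next
    case ph: False
    show ?thesis
    proof (cases "q < 2*t")
      case ql: True
      define q' where "q' = q mod t"
      have q': "q' < t" using t0 by (simp add: q'_def)
      have "(\<Sum>r<b*k. X2e $$ (r,p) * X2e $$ (r,q)) = (\<Sum>r<b*k. sg t q / 2 *
          (tt r q' * bb r (p - 2*t) - ll r q' * bb r (p - 2*t)))"
      proof (rule sum.cong[OF refl])
        fix r assume "r \<in> {..<b*k}"
        then have r: "r < b*k" by simp
        have pp: "2*t \<le> p" using ph by simp
        show "X2e $$ (r,p) * X2e $$ (r,q) = sg t q / 2 *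
          (tt r q' * bb r (p - 2*t) - ll r q' * bb r (p - 2*t))"
          unfolding X2e_lo[OF r ql] X2e_hi[OF r p pp] q'_def by (simp add: field_simps)
      qed
      also have "\<dots> = sg t q / 2 * ((\<Sum>r<b*k. tt r q' * bb r (p - 2*t)) - (\<Sum>r<b*k. ll r q' * bb r (p - 2*t)))"
      proof -
        define c where "c = sg t q / 2"
        show ?thesis unfolding c_def[symmetric] by (simp add: sum_distrib_left[symmetric] sum_subtractf)
      qed
      also have "\<dots> = 0" using q' p ph by (simp add: G5 G5')
      also have "\<dots> = Sm $$ (p,q)" unfolding Sm_def using ph ql p q by (simp add: mk_zero)
      finally show ?thesis using e by simp
    next
      case qh: False
      have "(\<Sum>r<b*k. X2e $$ (r,p) * X2e $$ (r,q)) = (\<Sum>r<b*k. bb r (p - 2*t) * bb r (q - 2*t))"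
      proof (rule sum.cong[OF refl])
        fix r assume "r \<in> {..<b*k}"
        then have r: "r < b*k" by simp
        have pp: "2*t \<le> p" and qq: "2*t \<le> q" using ph qh by simp_all
        show "X2e $$ (r,p) * X2e $$ (r,q) = bb r (p - 2*t) * bb r (q - 2*t)"
          unfolding X2e_hi[OF r p pp] X2e_hi[OF r q qq] ..
      qed
      also have "\<dots> = (if p - 2*t = q - 2*t then real k else 0)" using p q ph qh by (simp add: G4)
      also have "\<dots> = Sm $$ (p,q)" unfolding Sm_def using ph qh p q by (auto simp: mk_hi)
      finally show ?thesis using e by simp
    qed
  qed
qed (auto simp: Sm_def)

end

context setting begin

definition Wm where "Wm = mat t (2*t+b) (\<lambda>(a,p). if p < 2*t then 0 else NN (p - 2*t) a)"
definition Gm where "Gm = mk t b (1/(2*ell*real t)) (-1/(2*ell*real t^2)) (1/real k)"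

lemma Wm_dim[simp]: "dim_row Wm = t" "dim_col Wm = 2*t+b" by (simp_all add: Wm_def)

lemma W_eq: "transpose_mat X1e * X2e = Wm"
proof (rule eq_matI)
  fix a p assume "a < dim_row Wm" "p < dim_col Wm"
  then have a: "a < t" and p: "p < 2*t+b" by auto
  have e: "(transpose_mat X1e * X2e) $$ (a,p) = (\<Sum>r<b*k. X1e $$ (r,a) * X2e $$ (r,p))"
    using a p by (subst mult_entry) auto
  show "(transpose_mat X1e * X2e) $$ (a,p) = Wm $$ (a,p)"
  proof (cases "p < 2*t")
    case pl: True
    define p' where "p' = p mod t"
    have p': "p' < t" using t0 by (simp add: p'_def)
    have "(\<Sum>r<b*k. X1e $$ (r,a) * X2e $$ (r,p)) = (\<Sum>r<b*k. sg t p / 4 *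
          (tt r a * tt r p' - tt r a * ll r p' + ll r a * tt r p' - ll r a * ll r p'))"
    proof (rule sum.cong[OF refl])
      fix r assume "r \<in> {..<b*k}"
      then have r: "r < b*k" by simp
      show "X1e $$ (r,a) * X2e $$ (r,p) = sg t p / 4 *
          (tt r a * tt r p' - tt r a * ll r p' + ll r a * tt r p' - ll r a * ll r p')"
        unfolding X2e_lo[OF r pl] X1e_entry[OF r a] p'_def by (simp add: field_simps)
    qed
    also have "\<dots> = sg t p / 4 * ((\<Sum>r<b*k. tt r a * tt r p') - (\<Sum>r<b*k. tt r a * ll r p')
          + (\<Sum>r<b*k. ll r a * tt r p') - (\<Sum>r<b*k. ll r a * ll r p'))"
    proof -
      define c where "c = sg t p / 4"
      show ?thesis unfolding c_def[symmetric]
        by (simp add: sum_distrib_left[symmetric] sum.distrib sum_subtractf)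
    qed
    also have "\<dots> = 0" using a p' by (simp add: G1 G2 G3 G3s ell_def)
    also have "\<dots> = Wm $$ (a,p)" using a p pl by (simp add: Wm_def)
    finally show ?thesis using e by simp
  next
    case ph: False
    have pp: "2*t \<le> p" using ph by simp
    have "(\<Sum>r<b*k. X1e $$ (r,a) * X2e $$ (r,p)) = (\<Sum>r<b*k. 1 / 2 *
          (tt r a * bb r (p - 2*t) + ll r a * bb r (p - 2*t)))"
    proof (rule sum.cong[OF refl])
      fix r assume "r \<in> {..<b*k}"
      then have r: "r < b*k" by simp
      show "X1e $$ (r,a) * X2e $$ (r,p) = 1 / 2 *
          (tt r a * bb r (p - 2*t) + ll r a * bb r (p - 2*t))"
        unfolding X2e_hi[OF r p pp] X1e_entry[OF r a] by (simp add: field_simps)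
    qed
    also have "\<dots> = 1 / 2 * ((\<Sum>r<b*k. tt r a * bb r (p - 2*t)) + (\<Sum>r<b*k. ll r a * bb r (p - 2*t)))"
    proof -
      define c :: real where "c = 1 / 2"
      show ?thesis unfolding c_def[symmetric] by (simp add: sum_distrib_left[symmetric] sum.distrib)
    qed
    also have "\<dots> = NN (p - 2*t) a" using a p pp by (simp add: G5 G5')
    also have "\<dots> = Wm $$ (a,p)" using a p ph by (simp add: Wm_def)
    finally show ?thesis using e by simp
  qed
qed auto

lemma mk_cong: "\<alpha> = \<alpha>' \<Longrightarrow> \<beta> = \<beta>' \<Longrightarrow> \<gamma> = \<gamma>' \<Longrightarrow> mk t b \<alpha> \<beta> \<gamma> = mk t b \<alpha>' \<beta>' \<gamma>'" by simp

lemma kpos: "real k > 0" using k0 by simp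

lemma SG: "Sm * Gm = mk t b (1/2) (-1/(2*real t)) 1"
  unfolding Sm_def Gm_def mk_mult[OF t0]
  using ell_pos t0 kpos by (intro mk_cong) (simp_all add: field_simps power2_eq_square)

lemma GS: "Gm * Sm = mk t b (1/2) (-1/(2*real t)) 1"
  unfolding Sm_def Gm_def mk_mult[OF t0]
  using ell_pos t0 kpos by (intro mk_cong) (simp_all add: field_simps power2_eq_square)

lemma pen: "penrose Sm Gm"
  unfolding penrose_def
proof (intro conjI)
  show "Gm \<in> carrier_mat (dim_col Sm) (dim_row Sm)" by (simp add: Gm_def Sm_def mk_carrier)
  show "Sm * Gm * Sm = Sm" unfolding SG unfolding Sm_def mk_mult[OF t0]
    using ell_pos t0 kpos by (intro mk_cong) (simp_all add: field_simps)
  show "Gm * Sm * Gm = Gm" unfolding GS unfolding Gm_def mk_mult[OF t0]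
    using ell_pos t0 kpos by (intro mk_cong) (simp_all add: field_simps power2_eq_square)
  show "transpose_mat (Sm * Gm) = Sm * Gm" unfolding SG by (rule mk_transpose)
  show "transpose_mat (Gm * Sm) = Gm * Sm" unfolding GS by (rule mk_transpose)
qed

end

context setting begin

definition WGm where "WGm = mat t (2*t+b) (\<lambda>(a,q). if q < 2*t then 0 else NN (q - 2*t) a / real k)"

lemma Gm_dim[simp]: "dim_row Gm = 2*t+b" "dim_col Gm = 2*t+b" by (simp_all add: Gm_def)

lemma WG_eq: "Wm * Gm = WGm"
proof (rule eq_matI)
  fix a q assume "a < dim_row WGm" "q < dim_col WGm"
  then have a: "a < t" and q: "q < 2*t+b" by (auto simp: WGm_def)
  define f where "f p = Wm $$ (a,p) * Gm $$ (p,q)" for p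
  have "(Wm * Gm) $$ (a,q) = (\<Sum>p<2*t+b. f p)"
    unfolding f_def using a q by (subst mult_entry) auto
  also have "\<dots> = (\<Sum>p<t. f p) + (\<Sum>p<t. f (p + t)) + (\<Sum>i<b. f (i + 2*t))" by (rule sum_split3)
  also have "(\<Sum>p<t. f p) = 0" by (rule sum.neutral) (use a in \<open>simp add: f_def Wm_def\<close>)
  also have "(\<Sum>p<t. f (p + t)) = 0" by (rule sum.neutral) (use a in \<open>simp add: f_def Wm_def\<close>)
  also have "(\<Sum>i<b. f (i + 2*t)) = WGm $$ (a,q)"
  proof (cases "q < 2*t")
    case True
    have "(\<Sum>i<b. f (i + 2*t)) = 0"
    proof (rule sum.neutral, intro ballI)
      fix i assume "i \<in> {..<b}"
      then have i: "i < b" by simp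
      have "Gm $$ (i + 2*t, q) = 0" unfolding Gm_def using i q True by (intro mk_zero) auto
      then show "f (i + 2*t) = 0" by (simp add: f_def)
    qed
    then show ?thesis using a q True by (simp add: WGm_def)
  next
    case False
    have "(\<Sum>i<b. f (i + 2*t)) = (\<Sum>i<b. if i = q - 2*t then NN (q - 2*t) a / real k else 0)"
    proof (rule sum.cong[OF refl])
      fix i assume "i \<in> {..<b}"
      then have i: "i < b" by simp
      have "Gm $$ (i + 2*t, q) = (if i + 2*t = q then 1 / real k else 0)"
        unfolding Gm_def using i q False by (intro mk_hi) auto
      then show "f (i + 2*t) = (if i = q - 2*t then NN (q - 2*t) a / real k else 0)"
        using i a q False by (auto simp: f_def Wm_def)
    qed
    also have "\<dots> = NN (q - 2*t) a / real k" using q False by simp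
    finally show ?thesis using a q False by (simp add: WGm_def)
  qed
  finally show "(Wm * Gm) $$ (a,q) = WGm $$ (a,q)" by simp
qed (auto simp: WGm_def)

lemma WGW: "a < t \<Longrightarrow> c < t \<Longrightarrow> (WGm * transpose_mat Wm) $$ (a,c) = (if a = c then R else lam) / real k"
proof -
  assume a: "a < t" and c: "c < t"
  define f where "f q = WGm $$ (a,q) * transpose_mat Wm $$ (q,c)" for q
  have "(WGm * transpose_mat Wm) $$ (a,c) = (\<Sum>q<2*t+b. f q)"
    unfolding f_def using a c by (subst mult_entry) (auto simp: WGm_def)
  also have "\<dots> = (\<Sum>p<t. f p) + (\<Sum>p<t. f (p + t)) + (\<Sum>i<b. f (i + 2*t))" by (rule sum_split3)
  also have "(\<Sum>p<t. f p) = 0" by (rule sum.neutral) (use a c in \<open>simp add: f_def WGm_def\<close>)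
  also have "(\<Sum>p<t. f (p + t)) = 0" by (rule sum.neutral) (use a c in \<open>simp add: f_def WGm_def\<close>)
  also have "(\<Sum>i<b. f (i + 2*t)) = (\<Sum>i<b. NN i a * NN i c) / real k"
    unfolding sum_divide_distrib
    by (rule sum.cong[OF refl]) (use a c in \<open>simp add: f_def WGm_def Wm_def\<close>)
  finally show ?thesis using G6[OF a c] by simp
qed

lemma XX: "a < t \<Longrightarrow> c < t \<Longrightarrow> (transpose_mat X1e * X1e) $$ (a,c) = (if a = c then R / 2 else ell / 2)"
proof -
  assume a: "a < t" and c: "c < t"
  have "(transpose_mat X1e * X1e) $$ (a,c) = (\<Sum>r<b*k. X1e $$ (r,a) * X1e $$ (r,c))"
    using a c by (subst mult_entry) auto
  also have "\<dots> = (\<Sum>r<b*k. 1 / 4 * (tt r a * tt r c + tt r a * ll r c + ll r a * tt r c + ll r a * ll r c))"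
  proof (rule sum.cong[OF refl])
    fix r assume "r \<in> {..<b*k}"
    then have r: "r < b*k" by simp
    show "X1e $$ (r,a) * X1e $$ (r,c) = 1 / 4 * (tt r a * tt r c + tt r a * ll r c + ll r a * tt r c + ll r a * ll r c)"
      unfolding X1e_entry[OF r a] X1e_entry[OF r c] by (simp add: field_simps)
  qed
  also have "\<dots> = 1 / 4 * ((\<Sum>r<b*k. tt r a * tt r c) + (\<Sum>r<b*k. tt r a * ll r c)
      + (\<Sum>r<b*k. ll r a * tt r c) + (\<Sum>r<b*k. ll r a * ll r c))"
  proof -
    define c4 :: real where "c4 = 1 / 4"
    show ?thesis unfolding c4_def[symmetric] by (simp add: sum_distrib_left[symmetric] sum.distrib)
  qed
  also have "\<dots> = (if a = c then R / 2 else ell / 2)" using a c by (simp add: G1 G2 G3 G3s ell_def)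
  finally show ?thesis .
qed

lemma pr_eq: "pr_perp X2e = 1\<^sub>m (b*k) - X2e * Gm * transpose_mat X2e"
  unfolding pr_perp_def pr_mat_def S_eq mp_inv_eq[OF pen] by simp

lemma info_eq: "info_matrix t b k d = transpose_mat X1e * X1e - WGm * transpose_mat Wm"
proof -
  have cX1: "X1e \<in> carrier_mat (b*k) t" by (rule X1e_carrier)
  have cX2: "X2e \<in> carrier_mat (b*k) (2*t+b)" by (rule X2e_carrier)
  have cG: "Gm \<in> carrier_mat (2*t+b) (2*t+b)" unfolding Gm_def by (rule mk_carrier)
  have cX1t: "transpose_mat X1e \<in> carrier_mat t (b*k)" using cX1 by (simp only: transpose_carrier_mat)
  have cX2t: "transpose_mat X2e \<in> carrier_mat (2*t+b) (b*k)" using cX2 by (simp only: transpose_carrier_mat)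
  have cX2G: "X2e * Gm \<in> carrier_mat (b*k) (2*t+b)" by (rule mult_carrier_mat[OF cX2 cG])
  have cP: "X2e * Gm * transpose_mat X2e \<in> carrier_mat (b*k) (b*k)" by (rule mult_carrier_mat[OF cX2G cX2t])
  have cX1tP: "transpose_mat X1e * (X2e * Gm * transpose_mat X2e) \<in> carrier_mat t (b*k)"
    by (rule mult_carrier_mat[OF cX1t cP])
  have cW: "transpose_mat X1e * X2e \<in> carrier_mat t (2*t+b)" by (rule mult_carrier_mat[OF cX1t cX2])
  have cWG: "transpose_mat X1e * X2e * Gm \<in> carrier_mat t (2*t+b)" by (rule mult_carrier_mat[OF cW cG])
  have "info_matrix t b k d = transpose_mat X1e * pr_perp X2e * X1e"
    unfolding info_matrix_def Let_def KKp X1_eq X2_eq ..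
  also have "\<dots> = transpose_mat X1e * (1\<^sub>m (b*k) - X2e * Gm * transpose_mat X2e) * X1e"
    unfolding pr_eq ..
  also have "transpose_mat X1e * (1\<^sub>m (b*k) - X2e * Gm * transpose_mat X2e)
      = transpose_mat X1e * 1\<^sub>m (b*k) - transpose_mat X1e * (X2e * Gm * transpose_mat X2e)"
    by (rule mult_minus_distrib_mat[OF cX1t one_carrier_mat cP])
  also have "transpose_mat X1e * 1\<^sub>m (b*k) = transpose_mat X1e" by (rule right_mult_one_mat[OF cX1t])
  also have "(transpose_mat X1e - transpose_mat X1e * (X2e * Gm * transpose_mat X2e)) * X1e
      = transpose_mat X1e * X1e - transpose_mat X1e * (X2e * Gm * transpose_mat X2e) * X1e"
    by (rule minus_mult_distrib_mat[OF cX1t cX1tP cX1])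
  also have "transpose_mat X1e * (X2e * Gm * transpose_mat X2e) = transpose_mat X1e * (X2e * Gm) * transpose_mat X2e"
    by (rule assoc_mult_mat[OF cX1t cX2G cX2t, symmetric])
  also have "transpose_mat X1e * (X2e * Gm) = transpose_mat X1e * X2e * Gm"
    by (rule assoc_mult_mat[OF cX1t cX2 cG, symmetric])
  also have "transpose_mat X1e * X2e * Gm * transpose_mat X2e * X1e = transpose_mat X1e * X2e * Gm * (transpose_mat X2e * X1e)"
    by (rule assoc_mult_mat[OF cWG cX2t cX1])
  also have "transpose_mat X2e * X1e = transpose_mat (transpose_mat X1e * X2e)"
    using transpose_mult[OF cX1t cX2] by simp
  also have "transpose_mat X1e * X2e = Wm" by (rule W_eq)
  also have "Wm * Gm = WGm" by (rule WG_eq)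
  finally show ?thesis .
qed

lemma arith_off: "(U::real) \<noteq> 0 \<Longrightarrow> T \<noteq> 0 \<Longrightarrow> K \<noteq> 0 \<Longrightarrow>
   B * K / (T * U) / 2 - B * K / T * (K - 1) / U / K = B * (K - 2) / (2 * U) * (0 - 1 / T)"
  by (simp add: field_simps)
lemma arith_diag: "(U::real) \<noteq> 0 \<Longrightarrow> T \<noteq> 0 \<Longrightarrow> K \<noteq> 0 \<Longrightarrow> T = U + 1 \<Longrightarrow>
   B * K / T / 2 - B * K / T / K = B * (K - 2) / (2 * U) * (1 - 1 / T)"
proof -
  assume U: "U \<noteq> 0" and T: "T \<noteq> 0" and K: "K \<noteq> 0" and TU: "T = U + 1"
  have "1 - 1/T = U/T" using T TU by (simp add: field_simps)
  then have r: "B * (K - 2) / (2 * U) * (1 - 1 / T) = B * (K - 2) / (2 * T)" using U T by simp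
  have "B * K / T / K = B / T" using K by simp
  then have "B * K / T / 2 - B * K / T / K = B * (K - 2) / (2 * T)" using T by (simp add: field_simps)
  then show ?thesis using r by simp
qed

lemma final: "info_matrix t b k d =
    (real (b * (k - 2)) / (2 * real (t - 1))) \<cdot>\<^sub>m (1\<^sub>m t - (1 / real t) \<cdot>\<^sub>m J_mat t)"
proof (rule eq_matI)
  fix a c assume "a < dim_row ((real (b * (k - 2)) / (2 * real (t - 1))) \<cdot>\<^sub>m (1\<^sub>m t - (1 / real t) \<cdot>\<^sub>m J_mat t))"
    "c < dim_col ((real (b * (k - 2)) / (2 * real (t - 1))) \<cdot>\<^sub>m (1\<^sub>m t - (1 / real t) \<cdot>\<^sub>m J_mat t))"
  then have a: "a < t" and c: "c < t" by (auto simp: J_mat_def)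
  have l: "(transpose_mat X1e * X1e - WGm * transpose_mat Wm) $$ (a,c)
      = (transpose_mat X1e * X1e) $$ (a,c) - (WGm * transpose_mat Wm) $$ (a,c)"
    using a c by (intro index_minus_mat(1)) (auto simp: WGm_def)
  have r: "((real (b * (k - 2)) / (2 * real (t - 1))) \<cdot>\<^sub>m (1\<^sub>m t - (1 / real t) \<cdot>\<^sub>m J_mat t)) $$ (a,c)
     = (real b * (real k - 2)) / (2 * (real t - 1)) * ((if a = c then 1 else 0) - 1 / real t)"
    using a c k3 t3 by (simp add: J_mat_def of_nat_diff)
  have tt1: "real t - 1 \<noteq> 0" using t3 by simp
  have k0': "real k \<noteq> 0" using k3 by simp
  show "info_matrix t b k d $$ (a,c) = ((real (b * (k - 2)) / (2 * real (t - 1))) \<cdot>\<^sub>m (1\<^sub>m t - (1 / real t) \<cdot>\<^sub>m J_mat t)) $$ (a,c)"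
  proof -
    have e: "info_matrix t b k d $$ (a,c) = (if a = c then R / 2 else ell / 2) - (if a = c then R else lam) / real k"
      unfolding info_eq l XX[OF a c] WGW[OF a c] ..
    have t0': "real t \<noteq> 0" using t0 by simp
    show ?thesis
    proof (cases "a = c")
      case True
      then show ?thesis unfolding e r R_def using arith_diag[OF tt1 t0' k0', of "real b"] by simp
    next
      case False
      then show ?thesis unfolding e r lam_def R_def ell_val using arith_off[OF tt1 t0' k0', of "real b"] by simp
    qed
  qed
qed (auto simp: info_eq J_mat_def WGm_def)

end

theorem lemma4:
  fixes t b k l :: nat and d :: "nat \<Rightarrow> nat \<Rightarrow> nat"
  assumes "3 \<le> k" and "k \<le> t" and "0 < b"
    and "real l = real (b * k) / real (t * (t - 1))"
    and "CNBD t b k l d"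
  shows "info_matrix t b k d =
    (real (b * (k - 2)) / (2 * real (t - 1))) \<cdot>\<^sub>m (1\<^sub>m t - (1 / real t) \<cdot>\<^sub>m J_mat t)"
  proof -
  interpret setting t b k l d using assms by unfold_locales
  show ?thesis by (rule final)
qed

end
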